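(* Let $s>0$, $Y>3s$, and for $\tau\geq 0$ put $x_+(\tau)=\frac sYe^{s\tau}$, $\tau^*=\frac1s\ln\left(\frac Y{3s}\right)$, $\tau_c=\frac1s\ln\left(\frac Ys\right)$. Consider the delay system $\dot x=x(1-x)-yx$, $\dot y=-sy+Ye^{-s\tau}y(t-\tau)x(t-\tau)$, its coexistence equilibrium $E_+=(x_+(\tau),1-x_+(\tau))$ (positive for $\tau\in[0,\tau_c)$), and the characteristic equation of its linearization at $E_+$, \[ \lambda^2+s\left(1+\tfrac{e^{s\tau}}{Y}\right)\lambda+\left(-s\lambda+s\left(1-\tfrac{2se^{s\tau}}{Y}\right)\right)e^{-\lambda\tau}+\tfrac{s^2e^{s\tau}}{Y}=0. \tag{C} \] Define on $[0,\tau^*]$ \[ \omega_+(\tau)=\sqrt{\tfrac12\left(-x_+(\tau)^2+\sqrt{x_+(\tau)^4+s^2\left(12x_+(\tau)^2-16x_+(\tau)+4\right)}\right)}, \] \[ h_2(\omega,\tau)=\frac{\omega^2(1+s-x_+(\tau))-(1-2x_+(\tau))s\,x_+(\tau)}{s\left((1-2x_+(\tau))^2+\omega^2\right)},\qquad \theta(\tau)=\arccos\big(h_2(\omega_+(\tau),\tau)\big), \] and for each integer $n\geq0$ let $\tau_n^1<\dots<\tau_n^{j_n}$ be the points $\tau\in(0,\tau^* )$ with $\tau\omega_+(\tau)=\theta(\tau)+2n\pi$. Assume there exists an integer $N\geq0$ such that $(2N+1)\pi\leq\max_{\tau\in[0,\tau^*]}\tau\omega_+(\tau)\leq2(N+1)\pi$.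 Then: \begin{enumerate} \item For $0\leq n\leq N$, the curves $\theta(\tau)+2n\pi$ and $\tau\omega_+(\tau)$ intersect at least twice in $(0,\tau^* )$. \item For $n\geq N+1$, the curves $\theta(\tau)+2n\pi$ and $\tau\omega_+(\tau)$ do not intersect in $(0,\tau^* )$. \item If $\theta(\tau)+2n\pi$ and $\tau\omega_+(\tau)$ intersect for some $n\geq0$, then $\tau_0^1$ is the smallest and $\tau_0^{j_0}$ the largest value of $\tau$ for which (C) has a pair of purely imaginary roots. \item $E_+$ is locally asymptotically stable for $\tau\in[0,\tau_0^1)\cup(\tau_0^{j_0},\tau_c)$. \end{enumerate}
   Context: Local asymptotic stability of $E_+$ means all roots of (C) have negative real part. *)

theory Defs
  imports "HOL-Analysis.Analysis"
begin

definition xplus :: "real \<Rightarrow> real \<Rightarrow> real \<Rightarrow> real" where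
  "xplus s Y \<tau> = s / Y * exp (s * \<tau>)"

definition tau_star :: "real \<Rightarrow> real \<Rightarrow> real" where
  "tau_star s Y = ln (Y / (3 * s)) / s"

definition tau_c :: "real \<Rightarrow> real \<Rightarrow> real" where
  "tau_c s Y = ln (Y / s) / s"

definition charC :: "real \<Rightarrow> real \<Rightarrow> real \<Rightarrow> complex \<Rightarrow> complex" where
  "charC s Y \<tau> z =
     z^2 + complex_of_real (s * (1 + exp (s * \<tau>) / Y)) * z
     + (- complex_of_real s * z + complex_of_real (s * (1 - 2 * s * exp (s * \<tau>) / Y)))
         * exp (- z * complex_of_real \<tau>)
     + complex_of_real (s^2 * exp (s * \<tau>) / Y)"

definition LAS :: "real \<Rightarrow> real \<Rightarrow> real \<Rightarrow> bool" where
  "LAS s Y \<tau> \<longleftrightarrow> (\<forall>z. charC s Y \<tau> z = 0 \<longrightarrow> Re z < 0)"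

definition has_imag_pair :: "real \<Rightarrow> real \<Rightarrow> real \<Rightarrow> bool" where
  "has_imag_pair s Y \<tau> \<longleftrightarrow> (\<exists>\<omega>>0. charC s Y \<tau> (\<i> * complex_of_real \<omega>) = 0
                                   \<and> charC s Y \<tau> (- \<i> * complex_of_real \<omega>) = 0)"

definition omega_plus :: "real \<Rightarrow> real \<Rightarrow> real \<Rightarrow> real" where
  "omega_plus s Y \<tau> = (let x = xplus s Y \<tau> in
     sqrt ((1/2) * (sqrt (x^4 + s^2 * (12 * x^2 - 16 * x + 4)) - x^2)))"

definition h2 :: "real \<Rightarrow> real \<Rightarrow> real \<Rightarrow> real \<Rightarrow> real" where
  "h2 s Y \<omega> \<tau> = (let x = xplus s Y \<tau> in
     (\<omega>^2 * (1 + s - x) - (1 - 2 * x) * s * x) / (s * ((1 - 2 * x)^2 + \<omega>^2)))"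

definition theta :: "real \<Rightarrow> real \<Rightarrow> real \<Rightarrow> real" where
  "theta s Y \<tau> = arccos (h2 s Y (omega_plus s Y \<tau>) \<tau>)"

definition crossings :: "real \<Rightarrow> real \<Rightarrow> nat \<Rightarrow> real set" where
  "crossings s Y n = {\<tau>. 0 < \<tau> \<and> \<tau> < tau_star s Y \<and>
      \<tau> * omega_plus s Y \<tau> = theta s Y \<tau> + 2 * real n * pi}"

definition least_elem :: "real set \<Rightarrow> real \<Rightarrow> bool" where
  "least_elem A a \<longleftrightarrow> a \<in> A \<and> (\<forall>x\<in>A. a \<le> x)"

definition greatest_elem :: "real set \<Rightarrow> real \<Rightarrow> bool" where
  "greatest_elem A a \<longleftrightarrow> a \<in> A \<and> (\<forall>x\<in>A. x \<le> a)"

end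

theory Submission
  imports Defs "HOL-Complex_Analysis.Complex_Analysis"
begin


definition KK :: "real \<Rightarrow> real \<Rightarrow> real" where "KK s x = s^2 * (1 - x) * (1 - 3*x)"
definition WW :: "real \<Rightarrow> real \<Rightarrow> real" where
  "WW s x = sqrt ((1/2) * (sqrt (x^4 + s^2 * (12 * x^2 - 16 * x + 4)) - x^2))"
definition Cf :: "real \<Rightarrow> real \<Rightarrow> real \<Rightarrow> real" where
  "Cf s x om = (om^2 * (1 + s - x) - (1 - 2 * x) * s * x) / (s * ((1 - 2 * x)^2 + om^2))"
definition Sf :: "real \<Rightarrow> real \<Rightarrow> real \<Rightarrow> real" where
  "Sf s x om = om * ((s + x) * (1 - 2*x) + s * x - om^2) / (s * ((1 - 2 * x)^2 + om^2))"

lemma omega_plus_WW: "omega_plus s Y \<tau> = WW s (xplus s Y \<tau>)"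
  unfolding omega_plus_def WW_def Let_def ..

lemma h2_Cf: "h2 s Y om \<tau> = Cf s (xplus s Y \<tau>) om"
  unfolding h2_def Cf_def Let_def ..

lemma WW_props:
  fixes s x :: real
  assumes "s > 0" "0 < x" "x \<le> 1/3"
  shows "WW s x \<ge> 0" "(WW s x)^4 + x^2 * (WW s x)^2 = KK s x"
proof -
  define r where "r = sqrt (x^4 + s^2 * (12 * x^2 - 16 * x + 4))"
  have K0: "KK s x \<ge> 0" unfolding KK_def using assms by (intro mult_nonneg_nonneg) auto
  have inner: "x^4 + s^2 * (12 * x^2 - 16 * x + 4) = x^4 + 4 * KK s x"
    unfolding KK_def by (simp add: algebra_simps power2_eq_square)
  have r2: "r^2 = x^4 + 4 * KK s x" unfolding r_def inner using K0 by simp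
  have x4: "x^4 = (x^2)^2" by simp
  have "(x^2)^2 \<le> x^4 + s^2 * (12 * x^2 - 16 * x + 4)" using K0 inner by simp
  hence "sqrt ((x^2)^2) \<le> r" unfolding r_def by (rule real_sqrt_le_mono)
  hence rx: "x^2 \<le> r" by (simp only: real_sqrt_abs abs_power2)
  have w2: "(WW s x)^2 = (1/2) * (r - x^2)" unfolding WW_def r_def by (rule real_sqrt_pow2) (insert rx[unfolded r_def], simp)
  show "WW s x \<ge> 0" using rx[unfolded r_def] unfolding WW_def by simp
  have "(WW s x)^4 = ((WW s x)^2)^2" by simp
  also have "\<dots> = ((1/2) * (r - x^2))^2" by (simp add: w2)
  finally have e1: "(WW s x)^4 = ((1/2) * (r - x^2))^2" .
  show "(WW s x)^4 + x^2 * (WW s x)^2 = KK s x"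
    using e1 r2 w2 by algebra
qed

lemma WW_third: "s > 0 \<Longrightarrow> WW s (1/3) = 0"
proof -
  have "(1/3::real)^4 + s^2 * (12 * (1/3)^2 - 16 * (1/3) + 4) = ((1/3)^2)^2" by (simp add: power2_eq_square power4_eq_xxxx)
  thus ?thesis unfolding WW_def by (simp only: real_sqrt_abs) (simp add: power2_eq_square)
qed

lemma WW_pos:
  assumes "s > 0" "0 < x" "x < 1/3"
  shows "WW s x > 0"
proof -
  have "(WW s x)^4 + x^2 * (WW s x)^2 = KK s x" using WW_props[of s x] assms by auto
  moreover have "KK s x > 0" unfolding KK_def using assms by auto
  ultimately have "WW s x \<noteq> 0" by auto
  thus ?thesis using WW_props(1)[of s x] assms by auto
qed

lemma WW_unique:
  fixes s x om :: real
  assumes "om > 0" "om^4 + x^2 * om^2 = KK s x"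
  shows "om = WW s x"
proof -
  have inner: "x^4 + s^2 * (12 * x^2 - 16 * x + 4) = (2 * om^2 + x^2)^2"
    using assms(2) unfolding KK_def by (simp add: algebra_simps power2_eq_square power4_eq_xxxx)
  have "sqrt (x^4 + s^2 * (12 * x^2 - 16 * x + 4)) = 2 * om^2 + x^2"
    unfolding inner by simp
  hence "WW s x = sqrt (om^2)" unfolding WW_def by simp
  thus ?thesis using assms(1) by simp
qed

lemma WW_lt_T:
  fixes s x :: real
  assumes "s > 0" "0 < x" "x \<le> 1/3"
  shows "(WW s x)^2 < (s + x) * (1 - 2*x) + s * x"
proof (rule ccontr)
  define w where "w = (WW s x)^2"
  define T where "T = (s + x) * (1 - 2*x) + s * x"
  assume "\<not> (WW s x)^2 < (s + x) * (1 - 2*x) + s * x"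
  hence wT: "T \<le> w" unfolding w_def T_def by simp
  have eq: "w^2 + x^2 * w = KK s x" using WW_props(2)[OF assms] unfolding w_def
    by (simp add: power4_eq_xxxx power2_eq_square)
  have T1: "T \<ge> s * (1 - x)" unfolding T_def using assms by (simp add: algebra_simps)
  have Tpos: "s * (1 - x) > 0" using assms by simp
  have "T^2 \<ge> (s * (1 - x))^2" using T1 Tpos by (intro power_mono) auto
  moreover have "(s * (1 - x))^2 \<ge> KK s x" unfolding KK_def using assms
    by (simp add: power2_eq_square algebra_simps mult_left_mono)
  moreover have "w^2 \<ge> T^2" using wT T1 Tpos by (intro power_mono) auto
  moreover have "x^2 * w \<ge> x^2 * T" using wT by (simp add: mult_left_mono)
  moreover have "x^2 * T > 0"
  proof -
    have "T > 0" using T1 Tpos by linarith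
    thus ?thesis using assms by simp
  qed
  ultimately show False using eq by linarith
qed

lemma Cf_Sf_system:
  fixes s x om :: real
  assumes "s > 0" "(1 - 2*x)^2 + om^2 > 0"
  shows "s * x - om^2 + s*(1 - 2*x) * Cf s x om - s * om * Sf s x om = 0"
    and "(s + x) * om - s*(1 - 2*x) * Sf s x om - s * om * Cf s x om = 0"
proof -
  define D where "D = s * ((1 - 2 * x)^2 + om^2)"
  define A where "A = om^2 * (1 + s - x) - (1 - 2 * x) * s * x"
  define B where "B = om * ((s + x) * (1 - 2*x) + s * x - om^2)"
  have D0: "D \<noteq> 0" unfolding D_def using assms by (metis mult_pos_pos less_irrefl)
  have C: "Cf s x om = A / D" and S: "Sf s x om = B / D" unfolding Cf_def Sf_def A_def B_def D_def by simp_all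
  have e1: "(s * x - om^2) * D + s*(1 - 2*x) * A - s * om * B = 0"
    unfolding D_def A_def B_def by algebra
  have e2: "(s + x) * om * D - s*(1 - 2*x) * B - s * om * A = 0"
    unfolding D_def A_def B_def by algebra
  have "s * x - om^2 + s*(1 - 2*x) * (A/D) - s * om * (B/D) = ((s * x - om^2) * D + s*(1 - 2*x) * A - s * om * B) / D"
    using D0 by (simp add: field_simps)
  thus "s * x - om^2 + s*(1 - 2*x) * Cf s x om - s * om * Sf s x om = 0" unfolding C S e1 by simp
  have "(s + x) * om - s*(1 - 2*x) * (B/D) - s * om * (A/D) = ((s + x) * om * D - s*(1 - 2*x) * B - s * om * A) / D"
    using D0 by (simp add: field_simps)
  thus "(s + x) * om - s*(1 - 2*x) * Sf s x om - s * om * Cf s x om = 0" unfolding C S e2 by simp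
qed

lemma Cf_Sf_unique:
  fixes s x om C S :: real
  assumes "s > 0" "om > 0"
    and re: "s * x - om^2 + s*(1 - 2*x) * C - s * om * S = 0"
    and im: "(s + x) * om - s*(1 - 2*x) * S - s * om * C = 0"
  shows "C = Cf s x om" "S = Sf s x om"
proof -
  have D: "s * ((1 - 2 * x)^2 + om^2) \<noteq> 0" using assms by (simp add: add_nonneg_pos)
  have "C * (s * ((1 - 2 * x)^2 + om^2)) = (om^2 * (1 + s - x) - (1 - 2 * x) * s * x)"
    using re im by algebra
  thus "C = Cf s x om" unfolding Cf_def using D by (simp add: field_simps)
  have "S * (s * ((1 - 2 * x)^2 + om^2)) = om * ((s + x) * (1 - 2*x) + s * x - om^2)"
    using re im by algebra
  thus "S = Sf s x om" unfolding Sf_def using D by (simp add: field_simps)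
qed

lemma Cf_Sf_norm:
  fixes s x om :: real
  assumes "s > 0" "(1 - 2*x)^2 + om^2 > 0" "om^4 + x^2 * om^2 = KK s x"
  shows "(Cf s x om)^2 + (Sf s x om)^2 = 1"
proof -
  define D where "D = s * ((1 - 2 * x)^2 + om^2)"
  have D0: "D \<noteq> 0" unfolding D_def using assms by (metis mult_pos_pos less_irrefl)
  have "(om^2 * (1 + s - x) - (1 - 2 * x) * s * x)^2 + (om * ((s + x) * (1 - 2*x) + s * x - om^2))^2 = D^2"
    using assms(3) unfolding D_def KK_def by algebra
  thus ?thesis unfolding Cf_def Sf_def D_def[symmetric] using D0
    by (simp add: power_divide add_divide_distrib[symmetric])
qed

lemma modulus_from_CS:
  fixes s x om C S :: real
  assumes "s > 0" "om > 0"
    and re: "s * x - om^2 + s*(1 - 2*x) * C - s * om * S = 0"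
    and im: "(s + x) * om - s*(1 - 2*x) * S - s * om * C = 0"
    and cs: "C^2 + S^2 = 1"
  shows "om^4 + x^2 * om^2 = KK s x"
  using re im cs assms(1) unfolding KK_def by algebra



lemma charC_alt:
  "charC s Y \<tau> z = z^2 + of_real (s + xplus s Y \<tau>) * z
     + (of_real (s*(1 - 2*xplus s Y \<tau>)) - of_real s * z) * exp (- z * of_real \<tau>)
     + of_real (s * xplus s Y \<tau>)"
  unfolding charC_def xplus_def by (simp add: field_simps power2_eq_square)

lemma Re_charC_imag:
  "Re (charC s Y \<tau> (\<i> * of_real om)) =
     s * xplus s Y \<tau> - om^2 + s*(1 - 2*xplus s Y \<tau>) * cos (om*\<tau>) - s * om * sin (om*\<tau>)"
  unfolding charC_alt by (simp add: Re_exp Im_exp power2_eq_square algebra_simps)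

lemma Im_charC_imag:
  "Im (charC s Y \<tau> (\<i> * of_real om)) =
     (s + xplus s Y \<tau>) * om - s*(1 - 2*xplus s Y \<tau>) * sin (om*\<tau>) - s * om * cos (om*\<tau>)"
  unfolding charC_alt by (simp add: Re_exp Im_exp power2_eq_square algebra_simps)

lemma charC_imag_sym:
  "charC s Y \<tau> (\<i> * of_real (-om)) = 0 \<longleftrightarrow> charC s Y \<tau> (\<i> * of_real om) = 0"
  unfolding complex_eq_iff Re_charC_imag Im_charC_imag by (auto simp: algebra_simps)

lemma charC_zero: "charC s Y \<tau> 0 = of_real (s * (1 - xplus s Y \<tau>))"
  unfolding charC_alt by (simp add: algebra_simps)

lemma ln_div_less_iff:
  fixes s c t :: real
  assumes "s > 0" "c > 0"
  shows "t < ln c / s \<longleftrightarrow> exp (s * t) < c"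
proof -
  have "t < ln c / s \<longleftrightarrow> s * t < ln c" using assms by (simp add: pos_less_divide_eq mult.commute)
  also have "\<dots> \<longleftrightarrow> exp (s * t) < exp (ln c)" by simp
  finally show ?thesis using assms by simp
qed

lemma ln_div_le_iff:
  fixes s c t :: real
  assumes "s > 0" "c > 0"
  shows "t \<le> ln c / s \<longleftrightarrow> exp (s * t) \<le> c"
proof -
  have "t \<le> ln c / s \<longleftrightarrow> s * t \<le> ln c" using assms by (simp add: pos_le_divide_eq mult.commute)
  also have "\<dots> \<longleftrightarrow> exp (s * t) \<le> exp (ln c)" by simp
  finally show ?thesis using assms by simp
qed

context
  fixes s Y :: real
  assumes s: "s > 0" and Y: "Y > 3 * s"
begin

lemma Ypos: "Y > 0" using s Y by simp

lemma xpos: "xplus s Y t > 0"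
  unfolding xplus_def using s Ypos by simp

lemma x_lt_third_iff: "xplus s Y t < 1/3 \<longleftrightarrow> t < tau_star s Y"
proof -
  have "tau_star s Y = ln (Y / (3 * s)) / s" unfolding tau_star_def ..
  hence "t < tau_star s Y \<longleftrightarrow> exp (s * t) < Y / (3 * s)"
    using ln_div_less_iff[of s "Y / (3 * s)" t] s Ypos by simp
  also have "\<dots> \<longleftrightarrow> xplus s Y t < 1/3"
    unfolding xplus_def using s Ypos by (simp add: field_simps)
  finally show ?thesis ..
qed

lemma x_le_third_iff: "xplus s Y t \<le> 1/3 \<longleftrightarrow> t \<le> tau_star s Y"
proof -
  have "tau_star s Y = ln (Y / (3 * s)) / s" unfolding tau_star_def ..
  hence "t \<le> tau_star s Y \<longleftrightarrow> exp (s * t) \<le> Y / (3 * s)"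
    using ln_div_le_iff[of s "Y / (3 * s)" t] s Ypos by simp
  also have "\<dots> \<longleftrightarrow> xplus s Y t \<le> 1/3"
    unfolding xplus_def using s Ypos by (simp add: field_simps)
  finally show ?thesis ..
qed

lemma x_lt_1_iff: "xplus s Y t < 1 \<longleftrightarrow> t < tau_c s Y"
proof -
  have "tau_c s Y = ln (Y / s) / s" unfolding tau_c_def ..
  hence "t < tau_c s Y \<longleftrightarrow> exp (s * t) < Y / s"
    using ln_div_less_iff[of s "Y / s" t] s Ypos by simp
  also have "\<dots> \<longleftrightarrow> xplus s Y t < 1"
    unfolding xplus_def using s Ypos by (simp add: field_simps)
  finally show ?thesis ..
qed

lemma x_star: "xplus s Y (tau_star s Y) = 1/3"
  using x_lt_third_iff[of "tau_star s Y"] x_le_third_iff[of "tau_star s Y"] by simp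

lemma x_zero: "xplus s Y 0 = s / Y" unfolding xplus_def by simp

lemma tau_star_pos: "tau_star s Y > 0"
proof -
  have "s / Y < 1/3" using s Y Ypos by (simp add: field_simps)
  thus ?thesis using x_lt_third_iff[of 0] x_zero by simp
qed

lemma tau_star_lt_c: "tau_star s Y < tau_c s Y"
  using x_lt_1_iff[of "tau_star s Y"] x_star by simp

lemma x_bounds:
  assumes "0 \<le> t" "t \<le> tau_star s Y"
  shows "0 < xplus s Y t" "xplus s Y t \<le> 1/3"
  using xpos x_le_third_iff assms by auto

lemma Cf_bound:
  assumes "0 \<le> t" "t \<le> tau_star s Y"
  shows "(Cf s (xplus s Y t) (omega_plus s Y t))^2 + (Sf s (xplus s Y t) (omega_plus s Y t))^2 = 1"
proof -
  let ?x = "xplus s Y t"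
  have xb: "0 < ?x" "?x \<le> 1/3" using x_bounds assms by auto
  have "(1 - 2 * ?x)^2 > 0" using xb by simp
  hence "(1 - 2 * ?x)^2 + (WW s ?x)^2 > 0" by (simp add: add_pos_nonneg)
  thus ?thesis unfolding omega_plus_WW using Cf_Sf_norm[OF s _ WW_props(2)[OF s xb]] by simp
qed

lemma Sf_pos:
  assumes "0 \<le> t" "t < tau_star s Y"
  shows "Sf s (xplus s Y t) (omega_plus s Y t) > 0"
proof -
  let ?x = "xplus s Y t"
  have xb: "0 < ?x" "?x < 1/3" using xpos x_lt_third_iff assms by auto
  have W: "WW s ?x > 0" using WW_pos[OF s xb] .
  have T: "(s + ?x) * (1 - 2*?x) + s * ?x - (WW s ?x)^2 > 0" using WW_lt_T[OF s xb(1)] xb by simp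
  have "(1 - 2 * ?x)^2 > 0" using xb by simp
  hence D: "s * ((1 - 2 * ?x)^2 + (WW s ?x)^2) > 0" using s by (simp add: add_pos_nonneg)
  show ?thesis unfolding omega_plus_WW Sf_def using W T D by simp
qed

lemma h2_bounds:
  assumes "0 \<le> t" "t \<le> tau_star s Y"
  shows "-1 \<le> h2 s Y (omega_plus s Y t) t" "h2 s Y (omega_plus s Y t) t \<le> 1"
proof -
  have "(h2 s Y (omega_plus s Y t) t)^2 \<le> 1" using Cf_bound[OF assms] unfolding h2_Cf
    by (metis le_add_same_cancel1 zero_le_power2)
  thus "-1 \<le> h2 s Y (omega_plus s Y t) t" "h2 s Y (omega_plus s Y t) t \<le> 1"
    using abs_le_square_iff[of _ 1] by (auto simp: abs_le_iff)
qed

lemma h2_strict: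
  assumes "0 \<le> t" "t < tau_star s Y"
  shows "-1 < h2 s Y (omega_plus s Y t) t" "h2 s Y (omega_plus s Y t) t < 1"
proof -
  have "(h2 s Y (omega_plus s Y t) t)^2 < 1" using Cf_bound[of t] Sf_pos[OF assms] assms unfolding h2_Cf
    by (smt (verit) zero_less_power2)
  thus "-1 < h2 s Y (omega_plus s Y t) t" "h2 s Y (omega_plus s Y t) t < 1"
    by (auto simp: abs_square_less_1 abs_less_iff)
qed

lemma theta_bounds:
  assumes "0 \<le> t" "t < tau_star s Y"
  shows "0 < theta s Y t" "theta s Y t < pi"
  using arccos_lt_bounded[OF h2_strict[OF assms]] unfolding theta_def by auto

lemma theta_star: "theta s Y (tau_star s Y) = pi"
proof -
  have "omega_plus s Y (tau_star s Y) = 0" unfolding omega_plus_WW x_star using WW_third[OF s] .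
  hence "h2 s Y (omega_plus s Y (tau_star s Y)) (tau_star s Y) = -1"
    unfolding h2_Cf x_star Cf_def using s by (simp add: field_simps power2_eq_square)
  thus ?thesis unfolding theta_def by simp
qed

lemma omega_star: "omega_plus s Y (tau_star s Y) = 0"
  unfolding omega_plus_WW x_star using WW_third[OF s] .

lemma omega_nonneg: "0 \<le> t \<Longrightarrow> t \<le> tau_star s Y \<Longrightarrow> omega_plus s Y t \<ge> 0"
  unfolding omega_plus_WW using WW_props(1)[OF s] x_bounds by auto

lemma cont_x: "continuous_on A (xplus s Y)"
  unfolding xplus_def by (intro continuous_intros)

lemma cont_omega: "continuous_on A (omega_plus s Y)"
  unfolding omega_plus_def xplus_def Let_def by (intro continuous_intros)

lemma cont_theta: "continuous_on {0..tau_star s Y} (theta s Y)"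
proof -
  have "continuous_on {0..tau_star s Y} (\<lambda>t. h2 s Y (omega_plus s Y t) t)"
  proof -
    have nz: "s * ((1 - 2 * xplus s Y t)^2 + (omega_plus s Y t)^2) \<noteq> 0" if "t \<in> {0..tau_star s Y}" for t
    proof -
      have "xplus s Y t \<le> 1/3" using x_bounds that by auto
      hence "(1 - 2 * xplus s Y t)^2 > 0" by simp
      thus ?thesis using s by (metis add_pos_nonneg mult_pos_pos zero_le_power2 less_irrefl)
    qed
    have "continuous_on {0..tau_star s Y} (\<lambda>t. ((omega_plus s Y t)^2 * (1 + s - xplus s Y t) - (1 - 2 * xplus s Y t) * s * xplus s Y t) / (s * ((1 - 2 * xplus s Y t)^2 + (omega_plus s Y t)^2)))"
      using nz by (intro continuous_intros cont_omega cont_x) auto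
    thus ?thesis unfolding h2_def Let_def .
  qed
  thus ?thesis unfolding theta_def using h2_bounds by (intro continuous_intros) auto
qed

end


context
  fixes s Y :: real
  assumes s: "s > 0" and Y: "Y > 3 * s"
begin

lemma imag_root_imp:
  assumes t: "0 \<le> t" "t < tau_c s Y" and om: "om > 0"
    and root: "charC s Y t (\<i> * of_real om) = 0"
  shows "0 < t \<and> t < tau_star s Y \<and> om = omega_plus s Y t \<and>
         (\<exists>n::nat. t * omega_plus s Y t = theta s Y t + 2 * real n * pi)"
proof -
  define x where "x = xplus s Y t"
  define C where "C = cos (om * t)"
  define S where "S = sin (om * t)"
  have re: "s * x - om^2 + s*(1 - 2*x) * C - s * om * S = 0"
    using root Re_charC_imag[of s Y t om] unfolding x_def C_def S_def by (simp add: complex_eq_iff)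
  have im: "(s + x) * om - s*(1 - 2*x) * S - s * om * C = 0"
    using root Im_charC_imag[of s Y t om] unfolding x_def C_def S_def by (simp add: complex_eq_iff)
  have cs: "C^2 + S^2 = 1" unfolding C_def S_def by simp
  have mod: "om^4 + x^2 * om^2 = KK s x" using modulus_from_CS[OF s om re im cs] .
  have "om^4 + x^2 * om^2 > 0" using om by (simp add: add_pos_nonneg)
  hence KKpos: "s^2 * (1 - x) * (1 - 3*x) > 0" using mod unfolding KK_def by simp
  have x1: "x < 1" using x_lt_1_iff[OF s Y] t unfolding x_def by simp
  have "(1 - x) > 0" using x1 by simp
  hence h: "s^2 * (1 - x) > 0" using s by simp
  have "1 - 3 * x > 0" using zero_less_mult_pos[OF KKpos h] .
  hence x3: "x < 1/3" by simp
  have tstar: "t < tau_star s Y" using x_lt_third_iff[OF s Y] x3 unfolding x_def by simp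
  have omW: "om = omega_plus s Y t" unfolding omega_plus_WW x_def[symmetric] using WW_unique[OF om mod] .
  have CC: "C = Cf s x om" and SS: "S = Sf s x om" using Cf_Sf_unique[OF s om re im] by auto
  have Spos: "S > 0" unfolding SS x_def omW using Sf_pos[OF s Y t(1) tstar] .
  have tpos: "t > 0"
  proof (rule ccontr)
    assume "\<not> t > 0" hence "t = 0" using t by simp
    thus False using Spos unfolding S_def by simp
  qed
  have th: "theta s Y t = arccos C" unfolding theta_def h2_Cf CC x_def omW ..
  define u where "u = arccos C"
  have Cb: "-1 \<le> C" "C \<le> 1" unfolding C_def by auto
  have cu: "cos u = C" unfolding u_def using Cb by simp
  have su: "sin u = S"
  proof -
    have "sin u = sqrt (1 - C^2)" unfolding u_def using sin_arccos[OF Cb] .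
    also have "1 - C^2 = S^2" using cs by simp
    finally show ?thesis using Spos by simp
  qed
  have "cos (om * t - u) = 1" unfolding cos_diff cu su C_def[symmetric] S_def[symmetric]
    using cs by (simp add: power2_eq_square)
  then obtain k :: int where k: "om * t - u = of_int k * 2 * pi" using cos_one_2pi_int by blast
  have u0: "0 \<le> u" "u \<le> pi" unfolding u_def using arccos_lbound[OF Cb] arccos_ubound[OF Cb] by auto
  have "om * t > 0" using om tpos by simp
  have k0: "k \<ge> 0"
  proof (rule ccontr)
    assume "\<not> k \<ge> 0" hence "k \<le> -1" by simp
    hence h: "real_of_int k * 2 * pi \<le> -1 * 2 * pi" by (intro mult_right_mono) auto
    show False using k u0 \<open>om * t > 0\<close> h pi_gt_zero by linarith
  qed
  have "t * omega_plus s Y t = theta s Y t + 2 * real (nat k) * pi"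
    using k k0 unfolding th u_def[symmetric] omW[symmetric] by (simp add: algebra_simps)
  thus ?thesis using tpos tstar omW by blast
qed

lemma crossing_root:
  assumes "t \<in> crossings s Y n"
  shows "omega_plus s Y t > 0" "charC s Y t (\<i> * of_real (omega_plus s Y t)) = 0"
proof -
  have t: "0 < t" "t < tau_star s Y" and eq: "t * omega_plus s Y t = theta s Y t + 2 * real n * pi"
    using assms unfolding crossings_def by auto
  define x where "x = xplus s Y t"
  define om where "om = omega_plus s Y t"
  have x3: "0 < x" "x < 1/3" unfolding x_def using xpos[OF s Y] x_lt_third_iff[OF s Y] t by auto
  show ompos: "omega_plus s Y t > 0" unfolding omega_plus_WW using WW_pos[OF s x3[unfolded x_def]] .
  have Cb: "-1 \<le> Cf s x om" "Cf s x om \<le> 1" using h2_bounds[OF s Y, of t] t unfolding h2_Cf x_def om_def by auto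
  have th: "theta s Y t = arccos (Cf s x om)" unfolding theta_def h2_Cf x_def om_def ..
  have cs: "(Cf s x om)^2 + (Sf s x om)^2 = 1" using Cf_bound[OF s Y, of t] t unfolding x_def om_def by auto
  have Sp: "Sf s x om > 0" using Sf_pos[OF s Y, of t] t unfolding x_def om_def by auto
  have eq2: "om * t = arccos (Cf s x om) + 2 * real n * pi"
    using eq unfolding om_def[symmetric] th by (simp add: mult.commute)
  have c: "cos (om * t) = Cf s x om"
    unfolding eq2 cos_add cos_2npi sin_2npi by (simp add: Cb)
  have "sin (om * t) = sin (arccos (Cf s x om))"
    unfolding eq2 sin_add cos_2npi sin_2npi by simp
  also have "\<dots> = sqrt (1 - (Cf s x om)^2)" using sin_arccos[OF Cb] .
  also have "1 - (Cf s x om)^2 = (Sf s x om)^2" using cs by simp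
  finally have sn: "sin (om * t) = Sf s x om" using Sp by simp
  have D: "(1 - 2*x)^2 + om^2 > 0" using x3 by (simp add: add_pos_nonneg)
  show "charC s Y t (\<i> * of_real (omega_plus s Y t)) = 0"
    unfolding complex_eq_iff Re_charC_imag Im_charC_imag om_def[symmetric] x_def[symmetric] c sn
    using Cf_Sf_system[OF s D] by simp
qed

lemma has_imag_iff:
  assumes "0 \<le> t" "t < tau_c s Y"
  shows "has_imag_pair s Y t \<longleftrightarrow> (\<exists>n. t \<in> crossings s Y n)"
proof
  assume "has_imag_pair s Y t"
  then obtain om where om: "om > 0" "charC s Y t (\<i> * of_real om) = 0" unfolding has_imag_pair_def by auto
  from imag_root_imp[OF assms om] show "\<exists>n. t \<in> crossings s Y n" unfolding crossings_def by auto
next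
  assume "\<exists>n. t \<in> crossings s Y n"
  then obtain n where n: "t \<in> crossings s Y n" by auto
  have r: "charC s Y t (\<i> * of_real (omega_plus s Y t)) = 0" using crossing_root[OF n] by simp
  have r2: "charC s Y t (- \<i> * of_real (omega_plus s Y t)) = 0"
    using charC_imag_sym[of s Y t "omega_plus s Y t"] r by simp
  show "has_imag_pair s Y t" unfolding has_imag_pair_def using r r2 crossing_root(1)[OF n] by blast
qed

lemma no_imag_root:
  assumes "0 \<le> t" "t < tau_c s Y" "\<not> has_imag_pair s Y t" "Re z = 0"
  shows "charC s Y t z \<noteq> 0"
proof
  assume root: "charC s Y t z = 0"
  have z: "z = \<i> * of_real (Im z)" using assms(4) by (simp add: complex_eq_iff)
  consider "Im z = 0" | "Im z > 0" | "Im z < 0" by linarith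
  thus False
  proof cases
    case 1
    hence "z = 0" using z by simp
    moreover have "xplus s Y t < 1" using x_lt_1_iff[OF s Y] assms by simp
    ultimately show False using root charC_zero[of s Y t] s by simp
  next
    case 2
    have r1: "charC s Y t (\<i> * of_real (Im z)) = 0" using root z by metis
    have e: "- \<i> * of_real (Im z) = \<i> * of_real (- Im z)" by simp
    have r2: "charC s Y t (- \<i> * of_real (Im z)) = 0"
      unfolding e using charC_imag_sym[of s Y t "Im z"] r1 by simp
    have "has_imag_pair s Y t" unfolding has_imag_pair_def using 2 r1 r2 by blast
    thus False using assms(3) by simp
  next
    case 3
    have r0: "charC s Y t (\<i> * of_real (Im z)) = 0" using root z by metis
    have r1: "charC s Y t (\<i> * of_real (- Im z)) = 0" using charC_imag_sym[of s Y t "Im z"] r0 by simp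
    have e: "- \<i> * of_real (- Im z) = \<i> * of_real (Im z)" by simp
    have r2: "charC s Y t (- \<i> * of_real (- Im z)) = 0" unfolding e using r0 .
    have "has_imag_pair s Y t" unfolding has_imag_pair_def using 3 r1 r2
      by (intro exI[of _ "- Im z"]) simp
    thus False using assms(3) by simp
  qed
qed

end


lemma cont_F: "continuous_on UNIV (\<lambda>p. charC s Y (fst p) (snd p))"
  unfolding charC_alt xplus_def by (intro continuous_intros)

lemma isCont_F: "isCont (\<lambda>p. charC s Y (fst p) (snd p)) p"
  unfolding charC_alt xplus_def by (intro continuous_intros)

lemma charC_holo: "charC s Y t holomorphic_on A"
  unfolding charC_def by (intro holomorphic_intros)

lemma charC_unif:
  assumes K: "compact K" and lim: "ts \<longlonglongrightarrow> t0"
  shows "uniform_limit K (\<lambda>n. charC s Y (ts n)) (charC s Y t0) sequentially"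
proof (rule uniform_limitI)
  fix e :: real assume e: "e > 0"
  define F where "F = (\<lambda>p. charC s Y (fst p) (snd p))"
  define S where "S = cball t0 1 \<times> K"
  have "compact S" unfolding S_def using K by (intro compact_Times) auto
  moreover have "continuous_on S F" unfolding F_def using cont_F continuous_on_subset by blast
  ultimately have "uniformly_continuous_on S F" by (rule compact_uniformly_continuous[rotated])
  then obtain d where d: "d > 0" and dd: "\<And>p p'. p \<in> S \<Longrightarrow> p' \<in> S \<Longrightarrow> dist p' p < d \<Longrightarrow> dist (F p') (F p) < e"
    unfolding uniformly_continuous_on_def using e by metis
  have "\<forall>\<^sub>F n in sequentially. dist (ts n) t0 < min d 1"
    using tendstoD[OF lim, of "min d 1"] d by simp
  thus "\<forall>\<^sub>F n in sequentially. \<forall>z\<in>K. dist (charC s Y (ts n) z) (charC s Y t0 z) < e"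
  proof (rule eventually_mono)
    fix n assume n: "dist (ts n) t0 < min d 1"
    show "\<forall>z\<in>K. dist (charC s Y (ts n) z) (charC s Y t0 z) < e"
    proof
      fix z assume z: "z \<in> K"
      have p1: "(ts n, z) \<in> S" unfolding S_def using n z by (auto simp: dist_commute)
      have p0: "(t0, z) \<in> S" unfolding S_def using z by auto
      have "dist (ts n, z) (t0, z) < d" using n by (simp add: dist_Pair_Pair)
      from dd[OF p0 p1 this] show "dist (charC s Y (ts n) z) (charC s Y t0 z) < e" unfolding F_def by simp
    qed
  qed
qed

lemma root_bound:
  fixes z :: complex
  assumes s: "s > 0" and t: "0 \<le> t" and x: "0 < xplus s Y t" "xplus s Y t \<le> 1"
    and root: "charC s Y t z = 0" and re: "Re z \<ge> 0"
  shows "norm z \<le> 4 * s + 2"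
proof -
  define x where "x = xplus s Y t"
  define E where "E = exp (- z * of_real t)"
  define A where "A = of_real (s + x) * z"
  define B where "B = (of_real (s*(1 - 2*x)) - of_real s * z) * E"
  define C where "C = (of_real (s * x) :: complex)"
  have eq: "z^2 = - (A + B + C)" using root unfolding charC_alt A_def B_def C_def E_def x_def
    by (simp add: algebra_simps add_eq_0_iff)
  have nE: "norm E \<le> 1" unfolding E_def norm_exp_eq_Re using re t by (simp add: mult_nonneg_nonneg)
  have xb: "0 < x" "x \<le> 1" using x unfolding x_def by auto
  have nb: "\<bar>s*(1 - 2*x)\<bar> \<le> s" using xb s by (auto simp: abs_le_iff abs_mult)
  have nsx: "norm (complex_of_real (s + x)) = s + x" unfolding norm_of_real using xb s by simp
  have nA: "norm A \<le> (s + 1) * norm z" unfolding A_def norm_mult nsx using xb s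
    by (intro mult_right_mono) auto
  have "norm B = norm (of_real (s*(1 - 2*x)) - of_real s * z) * norm E" unfolding B_def norm_mult ..
  also have "\<dots> \<le> norm (of_real (s*(1 - 2*x)) - of_real s * z) * 1" using nE by (intro mult_left_mono) auto
  also have "\<dots> \<le> \<bar>s*(1 - 2*x)\<bar> + s * norm z"
  proof -
    have n1: "norm (complex_of_real (s*(1-2*x))) = \<bar>s*(1-2*x)\<bar>" by (rule norm_of_real)
    have n2: "norm (complex_of_real s * z) = s * norm z" using s by (simp add: norm_mult)
    show ?thesis using norm_triangle_ineq4[of "complex_of_real (s*(1-2*x))" "complex_of_real s * z"] n1 n2 by linarith
  qed
  finally have nB: "norm B \<le> s + s * norm z" using nb by linarith
  have nC: "norm C \<le> s" unfolding C_def norm_of_real using xb s by (simp add: abs_mult mult_left_le)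
  have "(norm z)^2 = norm (A + B + C)" using eq by (metis norm_minus_cancel norm_power)
  also have "\<dots> \<le> norm A + norm B + norm C" by (meson norm_triangle_le norm_triangle_ineq add_mono order_refl)
  finally have main: "(norm z)^2 \<le> (2 * s + 1) * norm z + 2 * s" using nA nB nC by (simp add: algebra_simps)
  show ?thesis
  proof (rule ccontr)
    assume "\<not> norm z \<le> 4 * s + 2"
    hence big: "norm z > 4 * s + 2" by simp
    have "(norm z)^2 = norm z * norm z" by (simp add: power2_eq_square)
    also have "\<dots> > (4 * s + 2) * norm z" using big by (intro mult_strict_right_mono) (use s in auto)
    finally have "(norm z)^2 > (4 * s + 2) * norm z" .
    moreover have "(2 * s + 1) * norm z > 2 * s" using big s
      by (smt (verit) mult_le_cancel_left1 mult_nonneg_nonneg)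
    ultimately show False using main by (simp add: algebra_simps)
  qed
qed

context
  fixes s Y :: real
  assumes s: "s > 0" and Y: "Y > 3 * s"
begin

lemma closed_step:
  assumes lim: "ts \<longlonglongrightarrow> t0" and las: "\<And>n. LAS s Y (ts n)"
    and t0: "0 \<le> t0" "t0 < tau_c s Y" and noim: "\<not> has_imag_pair s Y t0"
  shows "LAS s Y t0"
  unfolding LAS_def
proof (intro allI impI)
  fix z assume root: "charC s Y t0 z = 0"
  show "Re z < 0"
  proof (rule ccontr)
    assume "\<not> Re z < 0"
    hence "Re z = 0 \<or> Re z > 0" by linarith
    thus False
    proof
      assume "Re z = 0"
      thus False using no_imag_root[OF s Y t0 noim] root by blast
    next
      assume zpos: "Re z > 0"
      have xb: "0 < xplus s Y t0" "xplus s Y t0 \<le> 1" using xpos[OF s Y, of t0] x_lt_1_iff[OF s Y, of t0] t0 by auto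
      define w where "w = (of_real (4 * s + 3) :: complex)"
      have wS: "w \<in> {z. 0 < Re z}" unfolding w_def using s by simp
      have gw: "charC s Y t0 w \<noteq> 0"
      proof
        assume r0: "charC s Y t0 w = 0"
        have "norm w = 4 * s + 3" unfolding w_def norm_of_real using s by simp
        with root_bound[OF s t0(1) xb r0] wS show False by simp
      qed
      show False
      proof (cases "charC s Y t0 constant_on {z. 0 < Re z}")
        case True
        then obtain c where "\<forall>z\<in>{z. 0 < Re z}. charC s Y t0 z = c" unfolding constant_on_def by blast
        hence "charC s Y t0 z = charC s Y t0 w" using wS zpos by auto
        thus False using root gw by simp
      next
        case False
        have h1: "open {z. 0 < Re z}" using open_halfspace_Re_gt by simp
        have h2: "connected {z. 0 < Re z}" by auto
        have h3: "\<And>n. charC s Y (ts n) holomorphic_on {z. 0 < Re z}" by (rule charC_holo)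
        have h4: "charC s Y t0 holomorphic_on {z. 0 < Re z}" by (rule charC_holo)
        have h5: "\<And>K. compact K \<Longrightarrow> K \<subseteq> {z. 0 < Re z} \<Longrightarrow> uniform_limit K (\<lambda>n. charC s Y (ts n)) (charC s Y t0) sequentially"
          using charC_unif lim by blast
        have h6: "\<not> charC s Y t0 constant_on {z. 0 < Re z}" using False .
        have h7: "\<And>n z. z \<in> {z. 0 < Re z} \<Longrightarrow> charC s Y (ts n) z \<noteq> 0"
          using las unfolding LAS_def by fastforce
        have h8: "z \<in> {z. 0 < Re z}" using zpos by simp
        have "charC s Y t0 z \<noteq> 0"
          using Hurwitz_no_zeros[of "{z. 0 < Re z}" "\<lambda>n. charC s Y (ts n)" "charC s Y t0" z, OF h1 h2 h3 h4 h5 h6 h7 h8] .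
        thus False using root by simp
      qed
    qed
  qed
qed

lemma open_step:
  assumes las: "LAS s Y t1" and t1: "0 \<le> t1"
  shows "\<exists>e>0. \<forall>t. 0 \<le> t \<longrightarrow> t < tau_c s Y \<longrightarrow> dist t t1 < e \<longrightarrow> LAS s Y t"
proof (rule ccontr)
  assume neg: "\<not> ?thesis"
  have ex: "\<forall>n::nat. \<exists>t. 0 \<le> t \<and> t < tau_c s Y \<and> dist t t1 < inverse (real (Suc n)) \<and> \<not> LAS s Y t"
  proof
    fix n :: nat
    have "inverse (real (Suc n)) > 0" by simp
    thus "\<exists>t. 0 \<le> t \<and> t < tau_c s Y \<and> dist t t1 < inverse (real (Suc n)) \<and> \<not> LAS s Y t"
      using neg by blast
  qed
  obtain ts where tsall: "\<forall>n. 0 \<le> ts n \<and> ts n < tau_c s Y \<and> dist (ts n) t1 < inverse (real (Suc n)) \<and> \<not> LAS s Y (ts n)"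
    using choice[OF ex] by blast
  have ts: "\<And>n. 0 \<le> ts n" "\<And>n. ts n < tau_c s Y" "\<And>n. dist (ts n) t1 < inverse (real (Suc n))"
     "\<And>n. \<not> LAS s Y (ts n)" using tsall by auto
  have ex2: "\<forall>n. \<exists>z. charC s Y (ts n) z = 0 \<and> Re z \<ge> 0"
  proof
    fix n
    from ts(4)[of n] obtain z where "charC s Y (ts n) z = 0" "\<not> Re z < 0" unfolding LAS_def by blast
    thus "\<exists>z. charC s Y (ts n) z = 0 \<and> Re z \<ge> 0" by (intro exI[of _ z]) simp
  qed
  obtain zs where zsall: "\<forall>n. charC s Y (ts n) (zs n) = 0 \<and> Re (zs n) \<ge> 0"
    using choice[OF ex2] by blast
  have zs: "\<And>n. charC s Y (ts n) (zs n) = 0" "\<And>n. Re (zs n) \<ge> 0" using zsall by auto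
  have zb: "zs n \<in> cball 0 (4 * s + 2)" for n
  proof -
    have x1: "xplus s Y (ts n) < 1" using x_lt_1_iff[OF s Y, of "ts n"] ts(2)[of n] by simp
    have "0 < xplus s Y (ts n)" "xplus s Y (ts n) \<le> 1" using xpos[OF s Y, of "ts n"] x1 by auto
    from root_bound[OF s ts(1) this zs(1) zs(2)] show ?thesis by simp
  qed
  have sc: "seq_compact (cball (0::complex) (4 * s + 2))" by (rule compact_imp_seq_compact[OF compact_cball])
  have zb': "\<forall>n. zs n \<in> cball 0 (4 * s + 2)" using zb by blast
  obtain l r where l: "l \<in> cball 0 (4 * s + 2)" and r: "strict_mono r" and lr: "(zs \<circ> r) \<longlonglongrightarrow> l"
    by (rule seq_compactE[OF sc zb'])
  have "(\<lambda>n. dist (ts n) t1) \<longlonglongrightarrow> 0"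
  proof (rule tendsto_sandwich[of "\<lambda>n. 0" _ _ "\<lambda>n. inverse (real (Suc n))"])
    show "\<forall>\<^sub>F n in sequentially. 0 \<le> dist (ts n) t1" by simp
    show "\<forall>\<^sub>F n in sequentially. dist (ts n) t1 \<le> inverse (real (Suc n))" using ts(3) by (simp add: less_imp_le)
    show "(\<lambda>n. 0::real) \<longlonglongrightarrow> 0" by simp
    show "(\<lambda>n. inverse (real (Suc n))) \<longlonglongrightarrow> 0" using LIMSEQ_inverse_real_of_nat .
  qed
  hence "ts \<longlonglongrightarrow> t1" using tendsto_dist_iff by blast
  hence tr: "(ts \<circ> r) \<longlonglongrightarrow> t1" using LIMSEQ_subseq_LIMSEQ r by blast
  have "(\<lambda>n. ((ts \<circ> r) n, (zs \<circ> r) n)) \<longlonglongrightarrow> (t1, l)" using tr lr by (rule tendsto_Pair)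
  hence "(\<lambda>n. charC s Y (fst ((ts \<circ> r) n, (zs \<circ> r) n)) (snd ((ts \<circ> r) n, (zs \<circ> r) n))) \<longlonglongrightarrow> charC s Y (fst (t1, l)) (snd (t1, l))"
    by (rule isCont_tendsto_compose[OF isCont_F])
  hence "(\<lambda>n. 0::complex) \<longlonglongrightarrow> charC s Y t1 l" using zs(1) by simp
  hence root: "charC s Y t1 l = 0" using LIMSEQ_unique tendsto_const by blast
  have "(\<lambda>n. Re ((zs \<circ> r) n)) \<longlonglongrightarrow> Re l" using lr by (rule tendsto_Re)
  hence "0 \<le> Re l" by (rule LIMSEQ_le_const) (use zs(2) in auto)
  thus False using las root unfolding LAS_def by fastforce
qed

lemma continuation:
  assumes J: "connected J" "J \<subseteq> {0..<tau_c s Y}" and t0: "t0 \<in> J" "LAS s Y t0"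
    and noim: "\<And>t. t \<in> J \<Longrightarrow> \<not> has_imag_pair s Y t"
  shows "\<And>t. t \<in> J \<Longrightarrow> LAS s Y t"
proof -
  define G where "G = {t \<in> J. LAS s Y t}"
  have op: "openin (top_of_set J) G"
    unfolding openin_euclidean_subtopology_iff
  proof (intro conjI ballI)
    show "G \<subseteq> J" unfolding G_def by auto
    fix t1 assume "t1 \<in> G"
    hence "LAS s Y t1" "0 \<le> t1" unfolding G_def using J by auto
    from open_step[OF this] obtain e where "e > 0" "\<forall>t. 0 \<le> t \<longrightarrow> t < tau_c s Y \<longrightarrow> dist t t1 < e \<longrightarrow> LAS s Y t" by blast
    thus "\<exists>e>0. \<forall>x'\<in>J. dist x' t1 < e \<longrightarrow> x' \<in> G" unfolding G_def using J by (auto simp: subset_iff)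
  qed
  have cl: "closedin (top_of_set J) G"
    unfolding closedin_limpt
  proof (intro conjI allI impI)
    show "G \<subseteq> J" unfolding G_def by auto
    fix x assume "x islimpt G \<and> x \<in> J"
    then obtain f where f: "\<And>n. f n \<in> G - {x}" "f \<longlonglongrightarrow> x" and xJ: "x \<in> J" unfolding islimpt_sequential by blast
    have "LAS s Y x"
      using closed_step[OF f(2)] f(1) xJ J noim[OF xJ] unfolding G_def by auto
    thus "x \<in> G" unfolding G_def using xJ by auto
  qed
  have "G = {} \<or> G = J" using J(1) op cl unfolding connected_clopen by blast
  moreover have "t0 \<in> G" unfolding G_def using t0 by auto
  ultimately have "G = J" by auto
  thus "\<And>t. t \<in> J \<Longrightarrow> LAS s Y t" unfolding G_def by auto
qed

end


lemma LAS_zero: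
  assumes s: "s > 0" and x: "0 < xplus s Y 0" "xplus s Y 0 < 1"
  shows "LAS s Y 0"
  unfolding LAS_def
proof (intro allI impI)
  fix z assume root: "charC s Y 0 z = 0"
  define x where "x = xplus s Y 0"
  have eq: "z^2 + of_real x * z + of_real (s * (1 - x)) = 0"
    using root unfolding charC_alt x_def by (simp add: algebra_simps)
  have re: "Re z * Re z - Im z * Im z + x * Re z + s * (1 - x) = 0"
    using arg_cong[OF eq, of Re] by (simp add: power2_eq_square)
  have im: "Im z * (2 * Re z + x) = 0"
    using arg_cong[OF eq, of Im] by (simp add: power2_eq_square algebra_simps)
  show "Re z < 0"
  proof (rule ccontr)
    assume "\<not> Re z < 0"
    hence u: "Re z \<ge> 0" by simp
    have "2 * Re z + x > 0" using u x unfolding x_def by simp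
    hence "Im z = 0" using im by simp
    hence "Re z * Re z + x * Re z + s * (1 - x) = 0" using re by simp
    moreover have "Re z * Re z + x * Re z \<ge> 0" using u x unfolding x_def by simp
    moreover have "s * (1 - x) > 0" using s x unfolding x_def by simp
    ultimately show False by linarith
  qed
qed

lemma LAS_big:
  assumes s: "s > 0" and x: "1/3 < xplus s Y t" "xplus s Y t < 1" and t: "0 \<le> t"
  shows "LAS s Y t"
  unfolding LAS_def
proof (intro allI impI)
  fix z assume root: "charC s Y t z = 0"
  define x where "x = xplus s Y t"
  define Q where "Q = z^2 + of_real (s + x) * z + of_real (s * x)"
  define R where "R = of_real (s*(1 - 2*x)) - of_real s * z"
  define E where "E = exp (- z * of_real t)"
  have "Q + R * E = 0" using root unfolding charC_alt Q_def R_def E_def x_def by (simp add: algebra_simps)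
  hence QR: "Q = - (R * E)" by (simp add: add_eq_0_iff)
  show "Re z < 0"
  proof (rule ccontr)
    assume "\<not> Re z < 0"
    hence u: "Re z \<ge> 0" by simp
    have nE: "norm E \<le> 1" unfolding E_def norm_exp_eq_Re using u t by (simp add: mult_nonneg_nonneg)
    have "norm Q = norm R * norm E" unfolding QR by (simp add: norm_mult)
    also have "\<dots> \<le> norm R" using nE by (simp add: mult_left_le)
    finally have "norm Q \<le> norm R" .
    hence le: "(norm Q)^2 \<le> (norm R)^2" by (simp add: power_mono)
    define u' where "u' = Re z"
    define v where "v = Im z"
    have ReQ: "Re Q = u' * u' - v * v + (s + x) * u' + s * x" unfolding Q_def u'_def v_def by (simp add: power2_eq_square)
    have ImQ: "Im Q = 2 * u' * v + (s + x) * v" unfolding Q_def u'_def v_def by (simp add: power2_eq_square)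
    have ReR: "Re R = s * (1 - 2 * x) - s * u'" unfolding R_def u'_def by simp
    have ImR: "Im R = - s * v" unfolding R_def v_def by simp
    have id: "(Re Q)^2 + (Im Q)^2 - ((Re R)^2 + (Im R)^2) =
        (u' * u' + (2 * s + x) * u' + s * (3 * x - 1)) * (u' * u' + x * u' + s * (1 - x))
        + v * v * (2 * u' * u' + 2 * (s + x) * u' + x * x) + (v * v) * (v * v)"
      unfolding ReQ ImQ ReR ImR by algebra
    have u0: "u' \<ge> 0" using u unfolding u'_def .
    have p1: "u' * u' + (2 * s + x) * u' + s * (3 * x - 1) > 0"
    proof -
      have "s * (3 * x - 1) > 0" using s x unfolding x_def by simp
      moreover have "u' * u' + (2 * s + x) * u' \<ge> 0" using u0 s x unfolding x_def by simp
      ultimately show ?thesis by linarith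
    qed
    have p2: "u' * u' + x * u' + s * (1 - x) > 0"
    proof -
      have "s * (1 - x) > 0" using s x unfolding x_def by simp
      moreover have "u' * u' + x * u' \<ge> 0" using u0 x unfolding x_def by simp
      ultimately show ?thesis by linarith
    qed
    have p3: "v * v * (2 * u' * u' + 2 * (s + x) * u' + x * x) \<ge> 0"
    proof -
      have "2 * u' * u' + 2 * (s + x) * u' + x * x \<ge> 0" using u0 s x unfolding x_def by simp
      thus ?thesis by (simp add: mult_nonneg_nonneg)
    qed
    have p4: "(v * v) * (v * v) \<ge> 0" by simp
    have "(Re Q)^2 + (Im Q)^2 - ((Re R)^2 + (Im R)^2) > 0"
      unfolding id using mult_pos_pos[OF p1 p2] p3 p4 by linarith
    thus False using le unfolding cmod_power2 by linarith
  qed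
qed



theorem corollary3p5:
  fixes s Y :: real and N :: nat
  assumes "s > 0" and "Y > 3 * s"
    and "\<exists>\<tau>m\<in>{0..tau_star s Y}.
           (\<forall>\<tau>\<in>{0..tau_star s Y}. \<tau> * omega_plus s Y \<tau> \<le> \<tau>m * omega_plus s Y \<tau>m)
         \<and> (2 * real N + 1) * pi \<le> \<tau>m * omega_plus s Y \<tau>m
         \<and> \<tau>m * omega_plus s Y \<tau>m \<le> 2 * (real N + 1) * pi"
  shows "(\<forall>n\<le>N. \<exists>t1 t2. t1 < t2 \<and> t1 \<in> crossings s Y n \<and> t2 \<in> crossings s Y n)
       \<and> (\<forall>n\<ge>N + 1. crossings s Y n = {})
       \<and> ((\<exists>n. crossings s Y n \<noteq> {}) \<longrightarrow>
            (\<exists>a b. least_elem (crossings s Y 0) a \<and> greatest_elem (crossings s Y 0) b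
               \<and> least_elem {\<tau>. 0 \<le> \<tau> \<and> \<tau> < tau_c s Y \<and> has_imag_pair s Y \<tau>} a
               \<and> greatest_elem {\<tau>. 0 \<le> \<tau> \<and> \<tau> < tau_c s Y \<and> has_imag_pair s Y \<tau>} b))
       \<and> (\<exists>a b. least_elem (crossings s Y 0) a \<and> greatest_elem (crossings s Y 0) b
            \<and> (\<forall>\<tau>. (0 \<le> \<tau> \<and> \<tau> < a) \<or> (b < \<tau> \<and> \<tau> < tau_c s Y) \<longrightarrow> LAS s Y \<tau>))"
proof -
  have s: "s > 0" and Y: "Y > 3 * s" using assms(1,2) .
  obtain tm where tm: "tm \<in> {0..tau_star s Y}"
    and mx: "\<forall>\<tau>\<in>{0..tau_star s Y}. \<tau> * omega_plus s Y \<tau> \<le> tm * omega_plus s Y tm"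
    and lo: "(2 * real N + 1) * pi \<le> tm * omega_plus s Y tm"
    and hi: "tm * omega_plus s Y tm \<le> 2 * (real N + 1) * pi"
    using assms(3) by blast
  define ts where "ts = tau_star s Y"
  define tc where "tc = tau_c s Y"
  define f where "f t = t * omega_plus s Y t - theta s Y t" for t
  have ts0: "0 < ts" unfolding ts_def using tau_star_pos[OF s Y] .
  have tstc: "ts < tc" unfolding ts_def tc_def using tau_star_lt_c[OF s Y] .
  have fc: "continuous_on {0..ts} f"
    unfolding f_def ts_def
    by (intro continuous_intros cont_omega[OF s Y] cont_theta[OF s Y])
  have f0: "f 0 < 0" unfolding f_def using theta_bounds[OF s Y, of 0] ts0 unfolding ts_def by simp
  have fts: "f ts = - pi" unfolding f_def ts_def using omega_star[OF s Y] theta_star[OF s Y] by simp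
  have mpos: "tm * omega_plus s Y tm > 0"
  proof -
    have "(2 * real N + 1) * pi > 0" by simp
    thus ?thesis using lo by linarith
  qed
  have tm0: "0 < tm" using mpos tm by (cases "tm = 0") auto
  have tm1: "tm < ts"
  proof -
    have "tm \<noteq> ts" using mpos omega_star[OF s Y] unfolding ts_def by auto
    thus ?thesis using tm unfolding ts_def by auto
  qed
  have thtm: "0 < theta s Y tm" "theta s Y tm < pi" using theta_bounds[OF s Y, of tm] tm0 tm1 unfolding ts_def by auto
  have fm: "f tm > 2 * real N * pi" unfolding f_def using lo thtm by (simp add: algebra_simps)
  have cross_iff: "t \<in> crossings s Y n \<longleftrightarrow> 0 < t \<and> t < ts \<and> f t = 2 * real n * pi" for t n
    unfolding crossings_def f_def ts_def by auto
  have P1: "\<forall>n\<le>N. \<exists>t1 t2. t1 < t2 \<and> t1 \<in> crossings s Y n \<and> t2 \<in> crossings s Y n"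
  proof (intro allI impI)
    fix n assume nN: "n \<le> N"
    define y where "y = 2 * real n * pi"
    have y0: "0 \<le> y" unfolding y_def by simp
    have "y \<le> 2 * real N * pi" unfolding y_def using nN by simp
    hence ym: "y < f tm" using fm by linarith
    have c1: "continuous_on {0..tm} f" using continuous_on_subset[OF fc, of "{0..tm}"] tm1 by auto
    have c2: "continuous_on {tm..ts} f" using continuous_on_subset[OF fc, of "{tm..ts}"] tm0 by auto
    have fy1: "f 0 \<le> y" using f0 y0 by linarith
    have fy2: "f ts \<le> y" using fts y0 pi_gt_zero by linarith
    obtain t1 where t1: "0 \<le> t1" "t1 \<le> tm" "f t1 = y"
      using IVT'[of f 0 y tm, OF fy1 less_imp_le[OF ym] _ c1] tm0 by auto
    obtain t2 where t2: "tm \<le> t2" "t2 \<le> ts" "f t2 = y"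
      using IVT2'[of f ts y tm, OF fy2 less_imp_le[OF ym] _ c2] tm1 by auto
    have "t1 \<noteq> 0" using t1 f0 y0 by auto
    moreover have "t1 \<noteq> tm" using t1 ym by auto
    moreover have "t2 \<noteq> tm" using t2 ym by auto
    moreover have "t2 \<noteq> ts"
    proof
      assume "t2 = ts" hence "y = - pi" using t2 fts by simp
      thus False using y0 pi_gt_zero by linarith
    qed
    ultimately have "t1 < t2" "t1 \<in> crossings s Y n" "t2 \<in> crossings s Y n"
      using t1 t2 tm1 unfolding cross_iff y_def by auto
    thus "\<exists>t1 t2. t1 < t2 \<and> t1 \<in> crossings s Y n \<and> t2 \<in> crossings s Y n" by blast
  qed
  have P2: "\<forall>n\<ge>N + 1. crossings s Y n = {}"
  proof (intro allI impI)
    fix n assume nN: "n \<ge> N + 1"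
    show "crossings s Y n = {}"
    proof (rule ccontr)
      assume "crossings s Y n \<noteq> {}"
      then obtain t where t: "t \<in> crossings s Y n" by auto
      hence t0: "0 < t" "t < ts" and eq: "t * omega_plus s Y t = theta s Y t + 2 * real n * pi"
        unfolding crossings_def ts_def by auto
      have th: "theta s Y t > 0" using theta_bounds[OF s Y, of t] t0 unfolding ts_def by auto
      have "real n \<ge> real N + 1" using nN by simp
      hence "2 * real n * pi \<ge> 2 * (real N + 1) * pi" by simp
      hence "t * omega_plus s Y t > tm * omega_plus s Y tm" using eq th hi by linarith
      moreover have "t * omega_plus s Y t \<le> tm * omega_plus s Y tm" using mx t0 unfolding ts_def by auto
      ultimately show False by linarith
    qed
  qed
  define Z where "Z = crossings s Y 0"
  have Zeq: "Z = {t \<in> {0..ts}. f t = 0}"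
  proof -
    have "t \<in> Z \<longleftrightarrow> t \<in> {t \<in> {0..ts}. f t = 0}" for t
    proof
      assume "t \<in> Z" thus "t \<in> {t \<in> {0..ts}. f t = 0}" unfolding Z_def cross_iff by auto
    next
      assume h: "t \<in> {t \<in> {0..ts}. f t = 0}"
      hence "t \<noteq> 0" using f0 by auto
      moreover have "t \<noteq> ts" using h fts pi_gt_zero by auto
      ultimately show "t \<in> Z" using h unfolding Z_def cross_iff by auto
    qed
    thus ?thesis by blast
  qed
  have Zc: "compact Z"
  proof -
    have "closed Z" unfolding Zeq by (rule continuous_closed_preimage_constant[OF fc]) simp
    moreover have "bounded Z" unfolding Zeq by (rule bounded_subset[of "{0..ts}"]) auto
    ultimately show ?thesis using compact_eq_bounded_closed by blast
  qed
  have Zne: "Z \<noteq> {}" using P1 unfolding Z_def by fastforce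
  obtain a where a: "a \<in> Z" "\<forall>t\<in>Z. a \<le> t" using compact_attains_inf[OF Zc Zne] by blast
  obtain b where b: "b \<in> Z" "\<forall>t\<in>Z. t \<le> b" using compact_attains_sup[OF Zc Zne] by blast
  have la: "least_elem (crossings s Y 0) a" unfolding least_elem_def using a unfolding Z_def by auto
  have gb: "greatest_elem (crossings s Y 0) b" unfolding greatest_elem_def using b unfolding Z_def by auto
  have aZ: "0 < a" "a < ts" using a(1) unfolding Z_def cross_iff by auto
  have bZ: "0 < b" "b < ts" using b(1) unfolding Z_def cross_iff by auto
  define H where "H = {\<tau>. 0 \<le> \<tau> \<and> \<tau> < tau_c s Y \<and> has_imag_pair s Y \<tau>}"
  have ZH: "Z \<subseteq> H"
  proof
    fix t assume t: "t \<in> Z"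
    hence t0: "0 < t" "t < ts" unfolding Z_def cross_iff by auto
    hence "t < tau_c s Y" using tstc unfolding tc_def by simp
    moreover have "has_imag_pair s Y t" using has_imag_iff[OF s Y, of t] t t0 \<open>t < tau_c s Y\<close> unfolding Z_def by auto
    ultimately show "t \<in> H" unfolding H_def using t0 by auto
  qed
  have Hab: "a \<le> t \<and> t \<le> b" if t: "t \<in> H" for t
  proof -
    have t0: "0 \<le> t" "t < tau_c s Y" "has_imag_pair s Y t" using t unfolding H_def by auto
    then obtain n where n: "t \<in> crossings s Y n" using has_imag_iff[OF s Y, of t] by auto
    hence tt: "0 < t" "t < ts" "f t = 2 * real n * pi" unfolding cross_iff by auto
    have fy: "0 \<le> f t" using tt by simp
    have c1: "continuous_on {0..t} f" using continuous_on_subset[OF fc, of "{0..t}"] tt by auto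
    have c2: "continuous_on {t..ts} f" using continuous_on_subset[OF fc, of "{t..ts}"] tt by auto
    have fy1: "f 0 \<le> 0" using f0 by linarith
    have fy2: "f ts \<le> 0" using fts pi_gt_zero by linarith
    obtain t1 where t1: "0 \<le> t1" "t1 \<le> t" "f t1 = 0"
      using IVT'[of f 0 0 t, OF fy1 fy _ c1] tt by auto
    obtain t2 where t2: "t \<le> t2" "t2 \<le> ts" "f t2 = 0"
      using IVT2'[of f ts 0 t, OF fy2 fy _ c2] tt by auto
    have "t1 \<in> Z" unfolding Zeq using t1 tt by auto
    moreover have "t2 \<in> Z" unfolding Zeq using t2 tt by auto
    ultimately show ?thesis using a b t1 t2 by force
  qed
  have lH: "least_elem H a" unfolding least_elem_def using ZH a(1) Hab by auto
  have gH: "greatest_elem H b" unfolding greatest_elem_def using ZH b(1) Hab by auto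
  have P3: "(\<exists>n. crossings s Y n \<noteq> {}) \<longrightarrow>
            (\<exists>a b. least_elem (crossings s Y 0) a \<and> greatest_elem (crossings s Y 0) b
               \<and> least_elem {\<tau>. 0 \<le> \<tau> \<and> \<tau> < tau_c s Y \<and> has_imag_pair s Y \<tau>} a
               \<and> greatest_elem {\<tau>. 0 \<le> \<tau> \<and> \<tau> < tau_c s Y \<and> has_imag_pair s Y \<tau>} b)"
    using la gb lH gH unfolding H_def by blast
  have L1: "LAS s Y t" if "0 \<le> t" "t < a" for t
  proof -
    have J: "connected {0..<a}" "{0..<a} \<subseteq> {0..<tau_c s Y}" using aZ tstc unfolding tc_def by auto
    have x0: "0 < xplus s Y 0" "xplus s Y 0 < 1"
      using xpos[OF s Y, of 0] x_lt_1_iff[OF s Y, of 0] tau_star_pos[OF s Y] tau_star_lt_c[OF s Y] by auto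
    have las0: "LAS s Y 0" using LAS_zero[OF s x0] .
    have noim: "\<not> has_imag_pair s Y t'" if "t' \<in> {0..<a}" for t'
    proof
      assume "has_imag_pair s Y t'"
      hence "t' \<in> H" unfolding H_def using that J by auto
      thus False using Hab that by fastforce
    qed
    show ?thesis using continuation[OF s Y J _ las0 noim] aZ that by auto
  qed
  have L2: "LAS s Y t" if "b < t" "t < tau_c s Y" for t
  proof -
    have J: "connected {b<..<tau_c s Y}" "{b<..<tau_c s Y} \<subseteq> {0..<tau_c s Y}" using bZ by auto
    define t0 where "t0 = (ts + tc) / 2"
    have t0b: "ts < t0" "t0 < tc" unfolding t0_def using tstc by auto
    have x0: "1/3 < xplus s Y t0" "xplus s Y t0 < 1"
      using x_le_third_iff[OF s Y, of t0] x_lt_1_iff[OF s Y, of t0] t0b unfolding ts_def tc_def by auto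
    have las0: "LAS s Y t0" using LAS_big[OF s x0] t0b ts0 by simp
    have t0J: "t0 \<in> {b<..<tau_c s Y}" using t0b bZ unfolding tc_def by auto
    have noim: "\<not> has_imag_pair s Y t'" if "t' \<in> {b<..<tau_c s Y}" for t'
    proof
      assume "has_imag_pair s Y t'"
      hence "t' \<in> H" unfolding H_def using that bZ by auto
      thus False using Hab that by fastforce
    qed
    show ?thesis using continuation[OF s Y J t0J las0 noim] that by auto
  qed
  have P4: "\<exists>a b. least_elem (crossings s Y 0) a \<and> greatest_elem (crossings s Y 0) b
            \<and> (\<forall>\<tau>. (0 \<le> \<tau> \<and> \<tau> < a) \<or> (b < \<tau> \<and> \<tau> < tau_c s Y) \<longrightarrow> LAS s Y \<tau>)"
    using la gb L1 L2 by blast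
  show ?thesis using P1 P2 P3 P4 by blast
qed


end
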